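(* Let $n\ge 2$ and $m$ be positive integers, $\lambda=(\lambda_1,\dots,\lambda_n)\in\mathcal{P}^m_n$, and $k_{i,j}=k_{i,j}(\lambda)$ ($1\le i\le j\le n$) as defined below. Consider (1) $\lambda^{(1)}=(\lambda_2,\lambda_3,\dots,\lambda_n)$; (2) $\lambda^{(2)}$ with parts $\lambda^{(2)}_i=\lambda_i-k_{i,n}$, $1\le i\le n-1$; (3) $\lambda^{(3)}$ with parts $\lambda^{(3)}_i=\lambda^{(2)}_i-k_{i,n-1}$, $1\le i\le n-2$; (4) $\lambda^{(4)}$ with parts $\lambda^{(4)}_i=\lambda_i-k_{i,n-1}$, $1\le i\le n-1$. Then $\lambda^{(1)},\lambda^{(2)},\lambda^{(4)}\in\mathcal{P}^m_{n-1}$ and $\lambda^{(3)}\in\mathcal{P}^m_{n-2}$. Moreover, writing $k^{(h)}_{i,j}=k_{i,j}(\lambda^{(h)})$ (computed with $n-1$ in place of $n$ for $h\in\{1,2,4\}$, and with $n-2$ in place of $n$ for $h=3$), we have: $k^{(1)}_{i,j}=k_{i+1,j+1}$ for $1\le i\le j\le n-1$; $k^{(2)}_{i,j}=k_{i,j}$ for $1\le i\le j\le n-1$; $k^{(3)}_{i,j}=k_{i,j}$ for $1\le i\le j\le n-2$; $k^{(3)}_{i,j}=k^{(4)}_{i,j}$ for $1\le i\le j\le n-2$; and for $1\le i\le j\le n-1$: $k^{(4)}_{i,j}=k_{i,j+1}$ if $j=n-1$, and $k^{(4)}_{i,j}=k_{i,j}$ if $j\le n-2$.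
   Context: $\mathcal{P}^m_N$ denotes the set of integer partitions $(\mu_1\ge\cdots\ge\mu_N\ge0)$ with $\mu_i\le m(N-i+1)$ for all $i$. For $\mu\in\mathcal{P}^m_N$, integers $k_{i,j}(\mu)$, $1\le i\le j\le N$, are defined recursively (in order of decreasing $i$, and for fixed $i$ decreasing $j$) by $$k_{i,j}(\mu)=\min\left\{m,\left\lceil\frac{\mu_i-\sum_{\ell=j+1}^N k_{i,\ell}(\mu)+\sum_{\ell=i+1}^j k_{\ell,j}(\mu)}{j-i+1}\right\rceil\right\}.$$ *)

theory Defs
  imports Complex_Main
begin

text \<open>Partitions are represented as functions nat => int, where only the
values at indices 1..N are relevant.  Membership in P^m_N:\<close>

definition inP :: "nat \<Rightarrow> nat \<Rightarrow> (nat \<Rightarrow> int) \<Rightarrow> bool" where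
  "inP m N mu \<longleftrightarrow>
     (\<forall>i. 1 \<le> i \<and> i < N \<longrightarrow> mu (Suc i) \<le> mu i) \<and>
     (\<forall>i. 1 \<le> i \<and> i \<le> N \<longrightarrow> 0 \<le> mu i \<and> mu i \<le> int m * int (N - i + 1))"

function kk :: "nat \<Rightarrow> nat \<Rightarrow> (nat \<Rightarrow> int) \<Rightarrow> nat \<Rightarrow> nat \<Rightarrow> int" where
  "kk m N mu i j =
    (if 1 \<le> i \<and> i \<le> j \<and> j \<le> N then
       min (int m)
         \<lceil>(real_of_int (mu i - (\<Sum>l\<in>{j+1..N}. kk m N mu i l)
                            + (\<Sum>l\<in>{i+1..j}. kk m N mu l j)))
           / real (j - i + 1)\<rceil>
     else 0)"
  by pat_completeness auto
termination
  by (relation "measures [\<lambda>(m,N,mu,i,j). N - i, \<lambda>(m,N,mu,i,j). N - j]") auto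

end

theory Submission
  imports Defs
begin

declare kk.simps[simp del]

definition cdiv :: "int \<Rightarrow> int \<Rightarrow> int" where "cdiv x d = - ((- x) div d)"

lemma ceil_cdiv: "d > 0 \<Longrightarrow> \<lceil>real_of_int x / real d\<rceil> = cdiv x (int d)"
proof -
  assume "d > 0"
  have "- (real_of_int x / real d) = real_of_int (-x) / real_of_int (int d)" by simp
  then show ?thesis unfolding ceiling_def cdiv_def by (metis floor_divide_of_int_eq)
qed

lemma cdiv_char: assumes "d > 0" shows "d * (cdiv x d - 1) < x" "x \<le> d * cdiv x d"
proof -
  have e: "-x = d * ((-x) div d) + (-x) mod d" by simp
  have "0 \<le> (-x) mod d" "(-x) mod d < d" using assms by auto
  moreover have "d * (cdiv x d - 1) = - (d * ((-x) div d)) - d" "d * cdiv x d = - (d * ((-x) div d))"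
    by (simp_all add: cdiv_def algebra_simps)
  ultimately show "d * (cdiv x d - 1) < x" "x \<le> d * cdiv x d" using e by linarith+
qed

lemma cdiv_le_iff: assumes "d > 0" shows "cdiv x d \<le> q \<longleftrightarrow> x \<le> d * q"
proof
  assume "cdiv x d \<le> q"
  then have "d * cdiv x d \<le> d * q" using assms by (simp add: mult_left_mono)
  then show "x \<le> d * q" using cdiv_char(2)[OF assms, of x] by linarith
next
  assume h: "x \<le> d * q"
  show "cdiv x d \<le> q"
  proof (rule ccontr)
    assume "\<not> cdiv x d \<le> q"
    then have "q \<le> cdiv x d - 1" by simp
    then have "d * q \<le> d * (cdiv x d - 1)" using assms by (simp add: mult_left_mono)
    then show False using cdiv_char(1)[OF assms, of x] h by linarith
  qed
qed

lemma cdiv_ge_iff: assumes "d > 0" shows "q \<le> cdiv x d \<longleftrightarrow> d * (q - 1) < x"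
  using cdiv_le_iff[OF assms, of x "q - 1"] by auto

lemma cdiv_eqI: assumes "d > 0" "d * (q - 1) < x" "x \<le> d * q" shows "cdiv x d = q"
  using cdiv_le_iff[OF assms(1)] cdiv_ge_iff[OF assms(1)] assms by (meson order_antisym)

lemma kk_eq:
  assumes "1 \<le> i" "i \<le> j" "j \<le> N"
  shows "kk m N mu i j = min (int m) (cdiv (mu i - (\<Sum>l\<in>{j+1..N}. kk m N mu i l)
             + (\<Sum>l\<in>{i+1..j}. kk m N mu l j)) (int (j - i + 1)))"
proof -
  have c: "1 \<le> i \<and> i \<le> j \<and> j \<le> N" using assms by simp
  have p: "j - i + 1 > 0" by simp
  show ?thesis
    by (subst kk.simps) (simp only: if_P[OF c] ceil_cdiv[OF p])
qed

lemma kk_out: assumes "\<not> (1 \<le> i \<and> i \<le> j \<and> j \<le> N)" shows "kk m N mu i j = 0"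
  by (subst kk.simps) (rule if_not_P[OF assms])

lemma kk_induct[consumes 1, case_names step]:
  fixes N i j :: nat
  assumes jN: "j \<le> N" and step: "\<And>i j. j \<le> N \<Longrightarrow> (\<And>l. j < l \<Longrightarrow> l \<le> N \<Longrightarrow> P i l)
      \<Longrightarrow> (\<And>l. i < l \<Longrightarrow> l \<le> j \<Longrightarrow> P l j) \<Longrightarrow> P i j"
  shows "P i j"
  using jN
proof (induction "N - i" arbitrary: i j rule: less_induct)
  case (less i)
  note IHo = less.hyps
  show ?case using less.prems
  proof (induction "N - j" arbitrary: j rule: less_induct)
    case (less j)
    show ?case
    proof (rule step)
      show "j \<le> N" by fact
      fix l assume "j < l" "l \<le> N" then show "P i l" using less by auto
    next
      fix l assume "i < l" "l \<le> j" then show "P l j" using IHo less.prems by auto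
    qed
  qed
qed

lemma sum_split_top: fixes j N :: nat shows "j < N \<Longrightarrow> (\<Sum>l\<in>{j+1..N}. f l) = (\<Sum>l\<in>{j+1..N-1}. f l) + (f N :: int)"
proof -
  assume "j < N"
  then obtain M where "N = Suc M" by (cases N) auto
  then show ?thesis using \<open>j < N\<close> by (simp add: sum.cl_ivl_Suc)
qed

lemma kk_peel:
  assumes "j < N"
  shows "kk m (N-1) (\<lambda>i. mu i - kk m N mu i N) i j = kk m N mu i j"
proof -
  have "j \<le> N - 1" using assms by simp
  then show ?thesis
  proof (induction i j rule: kk_induct[where N="N-1"])
    case (step i j)
    show ?case
    proof (cases "1 \<le> i \<and> i \<le> j")
      case True
      have s1: "(\<Sum>l\<in>{j+1..N-1}. kk m (N-1) (\<lambda>i. mu i - kk m N mu i N) i l) = (\<Sum>l\<in>{j+1..N-1}. kk m N mu i l)"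
      proof (rule sum.cong[OF refl])
        fix l assume "l \<in> {j+1..N-1}" then show "kk m (N-1) (\<lambda>i. mu i - kk m N mu i N) i l = kk m N mu i l"
          by (intro step(2)) auto
      qed
      have s2: "(\<Sum>l\<in>{i+1..j}. kk m (N-1) (\<lambda>i. mu i - kk m N mu i N) l j) = (\<Sum>l\<in>{i+1..j}. kk m N mu l j)"
      proof (rule sum.cong[OF refl])
        fix l assume "l \<in> {i+1..j}" then show "kk m (N-1) (\<lambda>i. mu i - kk m N mu i N) l j = kk m N mu l j"
          using step(1) by (intro step(3)) auto
      qed
      have s3: "(\<Sum>l\<in>{j+1..N}. kk m N mu i l) = (\<Sum>l\<in>{j+1..N-1}. kk m N mu i l) + kk m N mu i N"
        using step assms by (intro sum_split_top) auto
      have jN: "j \<le> N - 1" "j \<le> N" using step(1) by auto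
      show ?thesis
        apply (subst kk_eq[OF _ _ jN(1)], use True in simp, use True in simp)
        apply (subst kk_eq[OF _ _ jN(2)], use True in simp, use True in simp)
        by (simp only: s1 s2 s3) (simp add: algebra_simps)
    next
      case False
      have "kk m (N-1) (\<lambda>i. mu i - kk m N mu i N) i j = 0" by (rule kk_out) (use False in auto)
      moreover have "kk m N mu i j = 0" by (rule kk_out) (use False in auto)
      ultimately show ?thesis by simp
    qed
  qed
qed


lemma sum_shift1: fixes a b :: nat assumes "1 \<le> b" shows "(\<Sum>l\<in>{a+1..b}. f l) = (\<Sum>l\<in>{a..b-1}. f (l+1))"
proof -
  obtain c where "b = Suc c" using assms by (cases b) auto
  then show ?thesis using sum.shift_bounds_cl_Suc_ivl[of f a c] by simp
qed

lemma kk_shift: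
  assumes "1 \<le> i" "j \<le> N - 1"
  shows "kk m (N-1) (\<lambda>i. mu (i+1)) i j = kk m N mu (i+1) (j+1)"
  using assms(2,1)
proof (induction i j rule: kk_induct[where N="N-1"])
  case (step i j)
  show ?case
  proof (cases "i \<le> j")
    case True
    have N2: "2 \<le> N" using step True by auto
    have s1: "(\<Sum>l\<in>{j+1..N-1}. kk m (N-1) (\<lambda>i. mu (i+1)) i l) = (\<Sum>l\<in>{j+1..N-1}. kk m N mu (i+1) (l+1))"
    proof (rule sum.cong[OF refl])
      fix l assume "l \<in> {j+1..N-1}" then show "kk m (N-1) (\<lambda>i. mu (i+1)) i l = kk m N mu (i+1) (l+1)"
        using step by (intro step(2)) auto
    qed
    have s1': "(\<Sum>l\<in>{j+1+1..N}. kk m N mu (i+1) l) = (\<Sum>l\<in>{j+1..N-1}. kk m N mu (i+1) (l+1))"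
      using N2 by (intro sum_shift1) auto
    have s2: "(\<Sum>l\<in>{i+1..j}. kk m (N-1) (\<lambda>i. mu (i+1)) l j) = (\<Sum>l\<in>{i+1..j}. kk m N mu (l+1) (j+1))"
    proof (rule sum.cong[OF refl])
      fix l assume "l \<in> {i+1..j}" then show "kk m (N-1) (\<lambda>i. mu (i+1)) l j = kk m N mu (l+1) (j+1)"
        using step by (intro step(3)) auto
    qed
    have s2': "(\<Sum>l\<in>{i+1+1..j+1}. kk m N mu l (j+1)) = (\<Sum>l\<in>{i+1..j}. kk m N mu (l+1) (j+1))"
      using sum_shift1[where a="i+1" and b="j+1" and f="\<lambda>l. kk m N mu l (j+1)"] by simp
    have d: "j + 1 - (i + 1) + 1 = j - i + 1" by simp
    show ?thesis
      apply (subst kk_eq[of i j "N-1"], use True step in simp, use True step in simp, use True step in simp)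
      apply (subst kk_eq[of "i+1" "j+1" N], use True step in simp, use True step in simp, use True step in simp)
      by (simp only: s1 s1' s2 s2' d)
  next
    case False
    have "kk m (N-1) (\<lambda>i. mu (i+1)) i j = 0" by (rule kk_out) (use False in auto)
    moreover have "kk m N mu (i+1) (j+1) = 0" by (rule kk_out) (use False in auto)
    ultimately show ?thesis by simp
  qed
qed

lemma kk_cong:
  assumes "\<forall>l. 1 \<le> l \<and> l \<le> N \<longrightarrow> mu l = mu' l" "j \<le> N"
  shows "kk m N mu i j = kk m N mu' i j"
  using assms(2)
proof (induction i j rule: kk_induct[where N="N"])
  case (step i j)
  show ?case
  proof (cases "1 \<le> i \<and> i \<le> j")
    case True
    have s1: "(\<Sum>l\<in>{j+1..N}. kk m N mu i l) = (\<Sum>l\<in>{j+1..N}. kk m N mu' i l)"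
      by (rule sum.cong[OF refl]) (use step in auto)
    have s2: "(\<Sum>l\<in>{i+1..j}. kk m N mu l j) = (\<Sum>l\<in>{i+1..j}. kk m N mu' l j)"
      by (rule sum.cong[OF refl]) (use step in auto)
    have e: "mu i = mu' i" using assms(1) True step(1) by auto
    show ?thesis
      apply (subst kk_eq[of i j N], use True step in simp, use True step in simp, use True step in simp)
      apply (subst kk_eq[of i j N], use True step in simp, use True step in simp, use True step in simp)
      by (simp only: s1 s2 e)
  next
    case False
    have "kk m N mu i j = 0" by (rule kk_out) (use False in auto)
    moreover have "kk m N mu' i j = 0" by (rule kk_out) (use False in auto)
    ultimately show ?thesis by simp
  qed
qed


lemma ar_P2:
  fixes L A x M a :: int
  assumes "L \<ge> 0" "A \<ge> 0" "x \<le> M*(L+1)" "a = min M (cdiv (x + A) (L+1))"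
  shows "x - a \<le> M*L"
proof (cases "M \<le> cdiv (x + A) (L+1)")
  case True
  then have "a = M" using assms by simp
  then show ?thesis using assms(3) by (simp add: algebra_simps)
next
  case False
  then have a: "a = cdiv (x + A) (L+1)" "a \<le> M" using assms by auto
  have "x + A \<le> (L+1) * a" using cdiv_char(2)[of "L+1" "x+A"] a assms by simp
  then have "x - a \<le> L * a" using assms by (simp add: algebra_simps)
  also have "\<dots> \<le> L * M" using a(2) assms(1) by (simp add: mult_left_mono)
  finally show ?thesis by (simp add: mult.commute)
qed

lemma ar_mono:
  fixes L d x1 A2 a0 a1 M :: int
  assumes L: "L \<ge> 1" and d: "d \<ge> 0"
    and a1: "a1 = min M (cdiv (x1 + A2) L)"
    and a0: "a0 = min M (cdiv (x1 + d + a1 + A2) (L+1))"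
  shows "a1 \<le> a0" "a0 \<le> a1 + d"
proof -
  show "a1 \<le> a0"
  proof (cases "M \<le> cdiv (x1 + d + a1 + A2) (L+1)")
    case True then show ?thesis using a0 a1 by simp
  next
    case False
    then have e: "a0 = cdiv (x1 + d + a1 + A2) (L+1)" using a0 by simp
    have "a1 \<le> cdiv (x1 + A2) L" using a1 by simp
    then have "L * (a1 - 1) < x1 + A2" using cdiv_ge_iff[of L] L by simp
    then have "(L+1) * (a1 - 1) < x1 + d + a1 + A2" using d by (simp add: algebra_simps)
    then show ?thesis using e cdiv_ge_iff[of "L+1"] L by simp
  qed
  show "a0 \<le> a1 + d"
  proof (cases "M \<le> cdiv (x1 + A2) L")
    case True then show ?thesis using a0 a1 d by simp
  next
    case False
    then have e: "a1 = cdiv (x1 + A2) L" using a1 by simp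
    have "x1 + A2 \<le> L * a1" using e cdiv_char(2)[of L] L by simp
    moreover have "L * d \<ge> 0" using L d by simp
    ultimately have "x1 + d + a1 + A2 \<le> (L+1) * (a1 + d)" by (simp add: algebra_simps)
    then have "cdiv (x1 + d + a1 + A2) (L+1) \<le> a1 + d" using cdiv_le_iff[of "L+1"] L by simp
    then show ?thesis using a0 by simp
  qed
qed

lemma inP_mono:
  assumes "inP m N mu" "1 \<le> i" "i \<le> l" "l \<le> N"
  shows "mu l \<le> mu i"
  using assms(3,4)
proof (induction l rule: dec_induct)
  case base then show ?case by simp
next
  case (step n)
  then have "mu (Suc n) \<le> mu n" using assms(1,2) unfolding inP_def by auto
  then show ?case using step by simp
qed

lemma inP_bnd:
  assumes "inP m N mu" "1 \<le> i" "i \<le> N"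
  shows "0 \<le> mu i" "mu i \<le> int m * int (N - i + 1)"
  using assms unfolding inP_def by auto

lemma colN:
  assumes "1 \<le> i" "i \<le> N"
  shows "kk m N mu i N = min (int m) (cdiv (mu i + (\<Sum>l\<in>{i+1..N}. kk m N mu l N)) (int (N - i + 1)))"
  by (subst kk_eq[OF assms order_refl]) simp

lemma col_basic:
  assumes P: "inP m N mu"
  shows "1 \<le> i \<Longrightarrow> i \<le> N \<Longrightarrow> 0 \<le> kk m N mu i N \<and> kk m N mu i N \<le> mu i"
proof (induction "N - i" arbitrary: i rule: less_induct)
  case (less i)
  define A where "A = (\<Sum>l\<in>{i+1..N}. kk m N mu l N)"
  have A0: "0 \<le> A" unfolding A_def by (rule sum_nonneg) (use less in auto)
  have "A \<le> (\<Sum>l\<in>{i+1..N}. mu i)" unfolding A_def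
  proof (rule sum_mono)
    fix l assume l: "l \<in> {i+1..N}"
    then have "kk m N mu l N \<le> mu l" using less by auto
    also have "mu l \<le> mu i" using inP_mono[OF P, of i l] l less by auto
    finally show "kk m N mu l N \<le> mu i" .
  qed
  also have "\<dots> = int (N - i) * mu i" by simp
  finally have A1: "A \<le> int (N - i) * mu i" .
  have mi: "0 \<le> mu i" using inP_bnd[OF P] less by auto
  have d: "int (N - i + 1) > 0" by simp
  have c0: "0 \<le> cdiv (mu i + A) (int (N - i + 1))"
    using cdiv_ge_iff[OF d] A0 mi by simp
  have "mu i + A \<le> int (N - i + 1) * mu i" using A1 by (simp add: algebra_simps)
  then have c1: "cdiv (mu i + A) (int (N - i + 1)) \<le> mu i" using cdiv_le_iff[OF d] by simp
  show ?case using colN[OF less.prems, of m mu] c0 c1 unfolding A_def[symmetric] by auto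
qed


lemma col_P2:
  assumes P: "inP m N mu" and i: "1 \<le> i" "i \<le> N"
  shows "mu i - kk m N mu i N \<le> int m * int (N - i)"
proof -
  define A where "A = (\<Sum>l\<in>{i+1..N}. kk m N mu l N)"
  have A0: "0 \<le> A" unfolding A_def by (rule sum_nonneg) (use col_basic[OF P] i in auto)
  have b: "mu i \<le> int m * (int (N - i) + 1)" using inP_bnd[OF P i] i by (simp add: ac_simps)
  have e: "kk m N mu i N = min (int m) (cdiv (mu i + A) (int (N - i) + 1))"
    using colN[OF i, of m mu] unfolding A_def using i by (simp add: ac_simps)
  show ?thesis using ar_P2[OF _ A0 b e] by simp
qed

lemma col_P45:
  assumes P: "inP m N mu" and i: "1 \<le> i" "i < N"
  shows "kk m N mu (i+1) N \<le> kk m N mu i N"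
    "kk m N mu i N - kk m N mu (i+1) N \<le> mu i - mu (i+1)"
proof -
  define A2 where "A2 = (\<Sum>l\<in>{i+2..N}. kk m N mu l N)"
  have e1: "kk m N mu (i+1) N = min (int m) (cdiv (mu (i+1) + A2) (int (N - i)))"
    using colN[of "i+1" N m mu] i unfolding A2_def by (simp add: Suc_diff_Suc)
  have s: "(\<Sum>l\<in>{i+1..N}. kk m N mu l N) = kk m N mu (i+1) N + A2"
    unfolding A2_def using i by (subst sum.atLeast_Suc_atMost) auto
  have e0: "kk m N mu i N = min (int m) (cdiv (mu (i+1) + (mu i - mu (i+1)) + kk m N mu (i+1) N + A2) (int (N - i) + 1))"
    using colN[of i N m mu] i unfolding s by (simp add: algebra_simps)
  have d: "mu i - mu (i+1) \<ge> 0" using inP_mono[OF P, of i "i+1"] i by simp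
  have L: "int (N - i) \<ge> 1" using i by simp
  from ar_mono[OF L d e1 e0]
  show "kk m N mu (i+1) N \<le> kk m N mu i N"
    "kk m N mu i N - kk m N mu (i+1) N \<le> mu i - mu (i+1)" by auto
qed

lemma col_top:
  assumes P: "inP m N mu" and N: "1 \<le> N"
  shows "kk m N mu N N = mu N"
proof -
  have 1: "kk m N mu N N = min (int m) (cdiv (mu N) 1)" using colN[of N N m mu] N by simp
  have 2: "cdiv (mu N) 1 = mu N" by (rule cdiv_eqI) auto
  have 3: "mu N \<le> int m" using inP_bnd[OF P N order_refl] by simp
  show ?thesis using 1 2 3 by simp
qed

lemma inP_G:
  assumes P: "inP m N mu" and N: "1 \<le> N"
  shows "inP m (N-1) (\<lambda>i. mu i - kk m N mu i N)"
  unfolding inP_def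
proof (intro conjI allI impI)
  fix i assume i: "1 \<le> i \<and> i < N - 1"
  show "mu (Suc i) - kk m N mu (Suc i) N \<le> mu i - kk m N mu i N"
  proof -
    have "i < N" using i by linarith
    then show ?thesis using col_P45[OF P, of i] i by simp
  qed
next
  fix i assume i: "1 \<le> i \<and> i \<le> N - 1"
  then have iN: "i \<le> N" by linarith
  show "0 \<le> mu i - kk m N mu i N" using col_basic[OF P, of i] i iN by simp
  show "mu i - kk m N mu i N \<le> int m * int (N - 1 - i + 1)"
  proof -
    have "N - 1 - i + 1 = N - i" using i by linarith
    then show ?thesis using col_P2[OF P, of i] i iN by simp
  qed
qed


lemma ar_row:
  fixes L lam A B p E M a b :: int
  assumes L: "L \<ge> 1" and p: "p \<ge> 0" and E0: "E \<ge> 0" and E1: "E \<le> L - 1"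
    and AB: "A - B = E + (L-1)*p"
    and a: "a = min M (cdiv (lam + A + p) (L+1))"
    and b: "b = min M (cdiv (lam - a + B) L)"
  shows "min M (cdiv (lam - b + A) L) = a"
    "a < M \<longrightarrow> 0 \<le> E + (a - b - p) \<and> E + (a - b - p) \<le> L"
proof -
  define t where "t = lam + A + p"
  have L0: "L > 0" "L + 1 > 0" using L by auto
  have exp1: "(L-1)*p = L*p - p" by (simp add: algebra_simps)
  have "min M (cdiv (lam - b + A) L) = a \<and> (a < M \<longrightarrow> 0 \<le> E + (a - b - p) \<and> E + (a - b - p) \<le> L)"
  proof (cases "cdiv t (L+1) < M")
    case True
    then have aa: "a = cdiv t (L+1)" using a t_def by simp
    define al where "al = (L+1)*a - t"
    have c1: "(L+1) * (a - 1) < t" "t \<le> (L+1) * a" using cdiv_char[OF L0(2), of t] aa by auto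
    have ex2: "(L+1) * (a - 1) = L*a + a - L - 1" "(L+1)*a = L*a + a" by (auto simp: algebra_simps)
    have al0a: "0 \<le> al" using c1(2) al_def by simp
    have al0b: "al \<le> L" using c1(1) al_def by (simp add: algebra_simps)
    note al0 = al0a al0b
    have xid: "lam - a + B = L*a - L*p - (al + E)" using AB exp1 ex2 al_def t_def by linarith
    define q where "q = (if al + E \<ge> L then 1 else 0 :: int)"
    have q01: "0 \<le> q" "q \<le> 1" unfolding q_def by auto
    have qL: "L*q \<le> al + E" "al + E < L*q + L" using al0 E0 E1 unfolding q_def by auto
    have cb: "cdiv (lam - a + B) L = a - p - q"
    proof (rule cdiv_eqI[OF L0(1)])
      have e: "L * (a - p - q - 1) = L*a - L*p - L*q - L" "L * (a - p - q) = L*a - L*p - L*q"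
        by (simp_all add: algebra_simps)
      have "L*a - L*p - L*q - L < lam - a + B" using xid qL by linarith
      then show "L * (a - p - q - 1) < lam - a + B" by (simp only: e)
      have "lam - a + B \<le> L*a - L*p - L*q" using xid qL by linarith
      then show "lam - a + B \<le> L * (a - p - q)" by (simp only: e)
    qed
    have aM: "a < M" using True aa by simp
    have bb: "b = a - p - q" using b cb aM p q01 by simp
    have yid: "lam - b + A = L*a - al + q" using bb ex2(2) al_def t_def by linarith
    have qa: "q \<le> al" "al - q < L" using al0 E0 E1 unfolding q_def by auto
    have cc: "cdiv (lam - b + A) L = a"
    proof (rule cdiv_eqI[OF L0(1)])
      have e: "L * (a - 1) = L*a - L" by (simp add: algebra_simps)
      have "L*a - L < lam - b + A" using yid qa by linarith
      then show "L * (a - 1) < lam - b + A" by (simp only: e)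
      show "lam - b + A \<le> L * a" using yid qa by linarith
    qed
    show ?thesis using cc aM bb q01 qL E0 E1 al0 unfolding q_def by auto
  next
    case False
    then have aa: "a = M" using a t_def by simp
    have c1: "(L+1) * (cdiv t (L+1) - 1) < t" using cdiv_char[OF L0(2), of t] by auto
    have "(L+1) * (M - 1) \<le> (L+1) * (cdiv t (L+1) - 1)" using False L0 by (intro mult_left_mono) auto
    with c1 have tlow: "(L+1) * (M - 1) < t" by linarith
    have xid: "lam - a + B = t - M - E - L*p" using AB exp1 aa t_def by linarith
    have Lp: "L*p \<ge> p" using mult_right_mono[OF L p] by simp
    have goal: "L * (M - 1) < lam - b + A"
    proof (cases "cdiv (lam - a + B) L < M")
      case False
      then have bb: "b = M" using b by simp
      have "L * (cdiv (lam - a + B) L - 1) < lam - a + B" using cdiv_char[OF L0(1)] by auto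
      moreover have "L * (M - 1) \<le> L * (cdiv (lam - a + B) L - 1)" using False L0 by (intro mult_left_mono) auto
      ultimately have "L * (M - 1) < lam - a + B" by linarith
      then show ?thesis using xid bb E0 Lp t_def by linarith
    next
      case True
      then have bb: "b = cdiv (lam - a + B) L" using b by simp
      have c2: "L * (b - 1) < lam - a + B" using cdiv_char[OF L0(1)] bb by auto
      define r where "r = b + p - M"
      define s where "s = t - (L+1)*(M-1) - 1"
      have s0: "s \<ge> 0" using tlow s_def by linarith
      have e: "L * (b - 1) = L*b - L" "(L+1)*(M-1) = L*M - L + M - 1" "L * r = L*b + L*p - L*M"
        "L * (M - 1) = L*M - L" unfolding r_def by (simp_all add: algebra_simps)
      have Lr: "L * r < s" using c2 xid e E0 s_def by linarith
      have "r + 1 \<le> s"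
      proof (cases "r \<ge> 0")
        case True
        then have "r \<le> L * r" using mult_right_mono[OF L True] by simp
        then show ?thesis using Lr by linarith
      next
        case False then show ?thesis using s0 by linarith
      qed
      then show ?thesis using e r_def s_def t_def by linarith
    qed
    have "M \<le> cdiv (lam - b + A) L" using goal cdiv_ge_iff[OF L0(1)] by simp
    then show ?thesis using aa by simp
  qed
  then show "min M (cdiv (lam - b + A) L) = a"
    "a < M \<longrightarrow> 0 \<le> E + (a - b - p) \<and> E + (a - b - p) \<le> L" by auto
qed

lemma ar_cap:
  fixes L M v0 v1 S :: int
  assumes L: "L \<ge> 2" and h: "min M (cdiv (v1 + S) (L-1)) = M" and v: "v1 \<le> v0"
  shows "min M (cdiv (v0 + M + S) L) = M"
proof -
  have L0: "L - 1 > 0" "L > 0" using L by auto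
  have "M \<le> cdiv (v1 + S) (L-1)" using h by (simp add: min_def split: if_splits)
  then have "(L-1) * (M - 1) < v1 + S" using cdiv_ge_iff[OF L0(1)] by simp
  moreover have "(L-1)*(M-1) = L*(M-1) - M + 1" by (simp add: algebra_simps)
  ultimately have "L * (M - 1) < v0 + M + S" using v by linarith
  then have "M \<le> cdiv (v0 + M + S) L" using cdiv_ge_iff[OF L0(2)] by simp
  then show ?thesis by simp
qed


lemma swap:
  assumes P: "inP m n lam" and n2: "n \<ge> 2"
  defines "a \<equiv> \<lambda>l. kk m n lam l n"
      and "mu \<equiv> \<lambda>i. lam i - kk m n lam i n"
  defines "b \<equiv> \<lambda>l. kk m (n-1) mu l (n-1)"
  defines "nu \<equiv> \<lambda>i. lam i - b i"
  defines "c \<equiv> \<lambda>l. kk m (n-1) nu l (n-1)"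
      and "E \<equiv> \<lambda>i. (\<Sum>l\<in>{i..n-1}. a l - b l - lam n)"
  shows "1 \<le> i \<Longrightarrow> i \<le> n-1 \<Longrightarrow> c i = a i \<and> (a i < int m \<longrightarrow> 0 \<le> E i \<and> E i \<le> int (n - i))"
proof (induction "n - i" arbitrary: i rule: less_induct)
  case (less i)
  have i1: "1 \<le> i" and i2: "i \<le> n - 1" using less.prems by auto
  have iln: "i < n" using i2 n2 by linarith
  have Pm: "inP m (n-1) mu" unfolding mu_def using inP_G[OF P] n2 by simp
  define L where "L = int (n - i)"
  have L1: "L \<ge> 1" using iln unfolding L_def by simp
  define A where "A = (\<Sum>l\<in>{i+1..n-1}. a l)"
  define B where "B = (\<Sum>l\<in>{i+1..n-1}. b l)"
  define p where "p = lam n"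
  have p0: "p \<ge> 0" unfolding p_def using inP_bnd[OF P, of n] n2 by simp
  have an: "a n = p" unfolding a_def p_def using col_top[OF P] n2 by simp
  have sa: "(\<Sum>l\<in>{i+1..n}. a l) = A + p" unfolding A_def using sum_split_top[OF iln, of a] an by simp
  have ai: "a i = min (int m) (cdiv (lam i + A + p) (L + 1))"
    using colN[OF i1 less_imp_le[OF iln], of m lam] sa unfolding a_def L_def
    by (simp add: ac_simps)
  have nn: "n - 1 - i + 1 = n - i" using iln by linarith
  have bi: "b i = min (int m) (cdiv (lam i - a i + B) L)"
    using colN[OF i1 i2, of m mu] unfolding b_def B_def L_def nn
    by (simp add: mu_def a_def)
  have sc: "(\<Sum>l\<in>{i+1..n-1}. c l) = A"
    unfolding A_def
  proof (rule sum.cong[OF refl])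
    fix l assume l: "l \<in> {i+1..n-1}"
    then show "c l = a l" using less.hyps[of l] l by auto
  qed
  have ci: "c i = min (int m) (cdiv (lam i - b i + A) L)"
    using colN[OF i1 i2, of m nu] sc unfolding c_def L_def nn
    by (simp add: nu_def)
  have aim: "a i \<le> int m" using ai by simp
  show ?case
  proof (cases "i = n - 1 \<or> a (i+1) < int m")
    case True
    define E1 where "E1 = (\<Sum>l\<in>{i+1..n-1}. a l - b l - lam n)"
    have E1b: "0 \<le> E1 \<and> E1 \<le> L - 1"
    proof (cases "i = n - 1")
      case True
      then have "E1 = 0" unfolding E1_def by simp
      then show ?thesis using True L_def iln by simp
    next
      case False
      then have "a (i+1) < int m" "i + 1 \<le> n - 1" using \<open>i = n - 1 \<or> a (i+1) < int m\<close> i2 by auto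
      then have "0 \<le> E (i+1) \<and> E (i+1) \<le> int (n - (i+1))" using less.hyps[of "i+1"] iln by auto
      moreover have "E (i+1) = E1" unfolding E_def E1_def by simp
      moreover have "int (n - (i+1)) = L - 1" unfolding L_def using iln by simp
      ultimately show ?thesis by simp
    qed
    have AB: "A - B = E1 + (L-1)*p"
    proof -
      have "E1 = A - B - (\<Sum>l\<in>{i+1..n-1}. lam n)" unfolding E1_def A_def B_def
        by (simp add: sum_subtractf)
      also have "(\<Sum>l\<in>{i+1..n-1}. lam n) = int (n - 1 - i) * p" unfolding p_def by simp
      also have "int (n - 1 - i) = L - 1" unfolding L_def using iln by simp
      finally show ?thesis by simp
    qed
    have R: "min (int m) (cdiv (lam i - b i + A) L) = a i"
      "a i < int m \<longrightarrow> 0 \<le> E1 + (a i - b i - p) \<and> E1 + (a i - b i - p) \<le> L"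
      using ar_row[OF L1 p0 _ _ AB ai bi] E1b by auto
    have Ei: "E i = (a i - b i - lam n) + E1" unfolding E_def E1_def
      using i2 by (subst sum.atLeast_Suc_atMost) auto
    show ?thesis using R ci Ei unfolding L_def p_def by auto
  next
    case False
    then have i3: "i + 1 \<le> n - 1" and am: "a (i+1) = int m" using i2 aim
      by (auto simp: a_def intro: antisym) (use colN[of "i+1" n m lam] in \<open>auto simp: min_def split: if_splits\<close>)
    have IH: "c (i+1) = a (i+1)" using less.hyps[of "i+1"] i3 iln by auto
    have a_mono: "a (i+1) \<le> a i" unfolding a_def using col_P45(1)[OF P i1 iln] by simp
    have aieq: "a i = int m" using a_mono am aim by simp
    have bmono: "b i - b (i+1) \<le> mu i - mu (i+1)"
    proof -
      have "i < n - 1" using i3 by linarith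
      then show ?thesis unfolding b_def using col_P45(2)[OF Pm i1] by simp
    qed
    have num: "nu (i+1) \<le> nu i" using bmono a_mono unfolding nu_def mu_def a_def by simp
    define S where "S = (\<Sum>l\<in>{i+2..n-1}. c l)"
    have nn2: "n - 1 - (i+1) + 1 = n - i - 1" using i3 by linarith
    have c1: "c (i+1) = min (int m) (cdiv (nu (i+1) + S) (L - 1))"
      using colN[of "i+1" "n-1" m nu] i3 unfolding c_def S_def L_def nn2
      by (simp add: of_nat_diff algebra_simps)
    have ss: "(\<Sum>l\<in>{i+1..n-1}. c l) = c (i+1) + S" unfolding S_def
      using i3 by (subst sum.atLeast_Suc_atMost) auto
    have c0: "c i = min (int m) (cdiv (nu i + int m + S) L)"
      using colN[OF i1 i2, of m nu] ss IH am unfolding c_def L_def nn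
      by (simp add: ac_simps)
    have L2: "L \<ge> 2" unfolding L_def using i3 by linarith
    have "c (i+1) = int m" using IH am by simp
    then have "min (int m) (cdiv (nu (i+1) + S) (L - 1)) = int m" using c1 by simp
    from ar_cap[OF L2 this num] have "c i = int m" using c0 by simp
    then show ?thesis using aieq by simp
  qed
qed

theorem lemma4p5:
  fixes n m :: nat and lam :: "nat \<Rightarrow> int"
  assumes "n \<ge> 2" and "m \<ge> 1" and "inP m n lam"
  defines "lam1 \<equiv> (\<lambda>i. lam (i + 1))"
      and "lam2 \<equiv> (\<lambda>i. lam i - kk m n lam i n)"
      and "lam3 \<equiv> (\<lambda>i. (lam i - kk m n lam i n) - kk m n lam i (n - 1))"
      and "lam4 \<equiv> (\<lambda>i. lam i - kk m n lam i (n - 1))"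
  shows "inP m (n - 1) lam1 \<and> inP m (n - 1) lam2 \<and> inP m (n - 1) lam4
         \<and> inP m (n - 2) lam3
         \<and> (\<forall>i j. 1 \<le> i \<and> i \<le> j \<and> j \<le> n - 1 \<longrightarrow>
               kk m (n - 1) lam1 i j = kk m n lam (i + 1) (j + 1))
         \<and> (\<forall>i j. 1 \<le> i \<and> i \<le> j \<and> j \<le> n - 1 \<longrightarrow>
               kk m (n - 1) lam2 i j = kk m n lam i j)
         \<and> (\<forall>i j. 1 \<le> i \<and> i \<le> j \<and> j \<le> n - 2 \<longrightarrow>
               kk m (n - 2) lam3 i j = kk m n lam i j)
         \<and> (\<forall>i j. 1 \<le> i \<and> i \<le> j \<and> j \<le> n - 2 \<longrightarrow>
               kk m (n - 2) lam3 i j = kk m (n - 1) lam4 i j)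
         \<and> (\<forall>i j. 1 \<le> i \<and> i \<le> j \<and> j \<le> n - 1 \<longrightarrow>
               kk m (n - 1) lam4 i j =
                 (if j = n - 1 then kk m n lam i (j + 1) else kk m n lam i j))"
proof -
  have n1: "1 \<le> n" using assms(1) by simp
  have nlt: "n - 1 < n" using assms(1) by simp
  define a where "a = (\<lambda>l. kk m n lam l n)"
  define b where "b = (\<lambda>l. kk m (n-1) lam2 l (n-1))"
  define nu where "nu = (\<lambda>i. lam i - b i)"
  have P: "inP m n lam" by fact
  have l2: "lam2 = (\<lambda>i. lam i - kk m n lam i n)" unfolding lam2_def by simp
  have P2: "inP m (n-1) lam2" unfolding l2 by (rule inP_G[OF P n1])
  have peel2: "\<And>i j. j < n \<Longrightarrow> kk m (n-1) lam2 i j = kk m n lam i j"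
    unfolding l2 by (rule kk_peel)
  have bk: "\<And>i. b i = kk m n lam i (n-1)" unfolding b_def using peel2[OF nlt] by simp
  have l4: "lam4 = nu" unfolding lam4_def nu_def bk by simp
  have l3: "lam3 = (\<lambda>i. lam2 i - kk m (n-1) lam2 i (n-1))"
  proof (rule ext)
    fix i
    have "kk m (n-1) lam2 i (n-1) = kk m n lam i (n-1)" by (rule peel2[OF nlt])
    moreover have "lam2 i = lam i - kk m n lam i n" by (simp add: lam2_def)
    ultimately show "lam3 i = lam2 i - kk m (n-1) lam2 i (n-1)" by (simp add: lam3_def)
  qed
  have nn: "n - 1 - 1 = n - 2" by simp
  have P3: "inP m (n-2) lam3" unfolding l3 using inP_G[OF P2] assms(1) nn by simp
  have peel3: "\<And>i j. j < n - 1 \<Longrightarrow> kk m (n-2) lam3 i j = kk m (n-1) lam2 i j"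
    unfolding l3 using kk_peel[of _ "n-1" m lam2] nn by simp
  have SW: "\<And>(i::nat). 1 \<le> i \<Longrightarrow> i \<le> n-1 \<Longrightarrow> kk m (n-1) nu i (n-1) = a i"
    using swap[OF P assms(1)] unfolding nu_def b_def a_def l2 by blast
  have P1: "inP m (n-1) lam1"
    unfolding inP_def lam1_def
  proof (intro conjI allI impI)
    fix i assume i: "1 \<le> i \<and> i < n - 1"
    then show "lam (Suc i + 1) \<le> lam (i + 1)" using P unfolding inP_def by auto
  next
    fix i assume i: "1 \<le> i \<and> i \<le> n - 1"
    then show "0 \<le> lam (i + 1)" using inP_bnd[OF P, of "i+1"] by auto
    have "n - 1 - i + 1 = n - (i+1) + 1" using i by linarith
    then show "lam (i + 1) \<le> int m * int (n - 1 - i + 1)" using inP_bnd[OF P, of "i+1"] i by auto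
  qed
  have P4: "inP m (n-1) lam4"
    unfolding inP_def l4
  proof (intro conjI allI impI)
    fix i assume i: "1 \<le> i \<and> i < n - 1"
    then have i1: "1 \<le> i" "i < n" "i < n - 1" by auto
    have "b i - b (i+1) \<le> lam2 i - lam2 (i+1)" unfolding b_def using col_P45(2)[OF P2 i1(1) i1(3)] by simp
    moreover have "a (i+1) \<le> a i" unfolding a_def using col_P45(1)[OF P i1(1) i1(2)] by simp
    ultimately show "nu (Suc i) \<le> nu i" unfolding nu_def l2 a_def by simp
  next
    fix i assume i: "1 \<le> i \<and> i \<le> n - 1"
    then have i1: "1 \<le> i" "i \<le> n" "i \<le> n - 1" by auto
    have e: "nu i = a i + (lam2 i - b i)" unfolding nu_def l2 a_def by simp
    have "0 \<le> a i" "a i \<le> int m" unfolding a_def using col_basic[OF P i1(1) i1(2)]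
      colN[OF i1(1) i1(2), of m lam] by auto
    moreover have "0 \<le> lam2 i - b i" "lam2 i - b i \<le> int m * int (n - 1 - i)"
      unfolding b_def using col_basic[OF P2 i1(1) i1(3)] col_P2[OF P2 i1(1) i1(3)] by auto
    moreover have "int m * int (n - 1 - i + 1) = int m + int m * int (n - 1 - i)"
      by (simp add: algebra_simps)
    ultimately show "0 \<le> nu i" "nu i \<le> int m * int (n - 1 - i + 1)" unfolding e by auto
  qed
  have C3: "\<And>i j. j \<le> n - 2 \<Longrightarrow> kk m (n - 2) lam3 i j = kk m n lam i j"
  proof -
    fix i j assume j: "j \<le> n - 2"
    then have "j < n - 1" "j < n" using assms(1) by auto
    then show "kk m (n - 2) lam3 i j = kk m n lam i j" using peel3 peel2 by simp
  qed
  have C34: "\<And>(i::nat) j. 1 \<le> i \<Longrightarrow> j \<le> n - 2 \<Longrightarrow> kk m (n - 1) lam4 i j = kk m (n - 2) lam3 i j"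
  proof -
    fix i j :: nat assume i: "1 \<le> i" and j: "j \<le> n - 2"
    have jl: "j < n - 1" using j assms(1) by linarith
    have "kk m (n - 1) lam4 i j = kk m (n-1-1) (\<lambda>i. lam4 i - kk m (n-1) lam4 i (n-1)) i j"
      using kk_peel[OF jl, of m lam4 i] by simp
    also have "\<dots> = kk m (n-2) lam3 i j"
      unfolding nn
    proof (rule kk_cong)
      show "j \<le> n - 2" by fact
      show "\<forall>l. 1 \<le> l \<and> l \<le> n - 2 \<longrightarrow> lam4 l - kk m (n - 1) lam4 l (n - 1) = lam3 l"
      proof (intro allI impI)
        fix l assume l: "1 \<le> l \<and> l \<le> n - 2"
        then have "kk m (n - 1) lam4 l (n - 1) = a l" unfolding l4 using SW[of l] by auto
        then show "lam4 l - kk m (n - 1) lam4 l (n - 1) = lam3 l"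
          unfolding lam4_def lam3_def a_def by simp
      qed
    qed
    finally show "kk m (n - 1) lam4 i j = kk m (n - 2) lam3 i j" .
  qed
  show ?thesis
  proof (intro conjI allI impI)
    show "inP m (n - 1) lam1" by (rule P1)
    show "inP m (n - 1) lam2" by (rule P2)
    show "inP m (n - 1) lam4" by (rule P4)
    show "inP m (n - 2) lam3" by (rule P3)
  next
    fix i j assume h: "1 \<le> i \<and> i \<le> j \<and> j \<le> n - 1"
    show "kk m (n - 1) lam1 i j = kk m n lam (i + 1) (j + 1)"
      unfolding lam1_def using kk_shift[of i j n m lam] h by simp
  next
    fix i j assume h: "1 \<le> i \<and> i \<le> j \<and> j \<le> n - 1"
    show "kk m (n - 1) lam2 i j = kk m n lam i j" using peel2 h nlt by simp
  next
    fix i j assume h: "1 \<le> i \<and> i \<le> j \<and> j \<le> n - 2"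
    show "kk m (n - 2) lam3 i j = kk m n lam i j" using C3 h by simp
  next
    fix i j assume h: "1 \<le> i \<and> i \<le> j \<and> j \<le> n - 2"
    show "kk m (n - 2) lam3 i j = kk m (n - 1) lam4 i j" using C34 h by simp
  next
    fix i j assume h: "1 \<le> i \<and> i \<le> j \<and> j \<le> n - 1"
    show "kk m (n - 1) lam4 i j = (if j = n - 1 then kk m n lam i (j + 1) else kk m n lam i j)"
    proof (cases "j = n - 1")
      case True
      then have "kk m (n - 1) lam4 i j = a i" unfolding l4 using SW h by auto
      then show ?thesis using True n1 unfolding a_def by simp
    next
      case False
      then have "j \<le> n - 2" using h by linarith
      then show ?thesis using C34 C3 h False by simp
    qed
  qed
qed

end
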